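(* Let $d_1$ and $d_2$ be two metrics on the same set $X$. The following three statements are equivalent: (i) the set of sequences in $X$ that are $d_1$-statistically convergent coincides with the set of sequences in $X$ that are $d_2$-statistically convergent; (ii) the set of sequences that converge in $(X,d_1)$ coincides with the set of sequences that converge in $(X,d_2)$; (iii) $d_1$ and $d_2$ induce the same topology on $X$.
   Context: For a metric $d$ on $X$, a sequence $(x_n)$ of points of $X$ is $d$-statistically convergent to $a\in X$ if for every $\epsilon>0$, $\lim_{n\to\infty}\frac{1}{n}\left|\{k: k\le n,\ d(x_k,a)\ge\epsilon\}\right|=0$ ($|B|$ is the cardinality of $B$); it is $d$-statistically convergent if it is $d$-statistically convergent to some point of $X$. *)

theory Defs
  imports "HOL-Analysis.Analysis"
begin

definition stat_convergent_to :: "'a set \<Rightarrow> ('a \<Rightarrow> 'a \<Rightarrow> real) \<Rightarrow> (nat \<Rightarrow> 'a) \<Rightarrow> 'a \<Rightarrow> bool" where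
  "stat_convergent_to X d x a \<longleftrightarrow> a \<in> X \<and>
     (\<forall>\<epsilon>>0. (\<lambda>n. real (card {k. k < n \<and> d (x k) a \<ge> \<epsilon>}) / real n) \<longlonglongrightarrow> 0)"

definition stat_convergent :: "'a set \<Rightarrow> ('a \<Rightarrow> 'a \<Rightarrow> real) \<Rightarrow> (nat \<Rightarrow> 'a) \<Rightarrow> bool" where
  "stat_convergent X d x \<longleftrightarrow> (\<exists>a. stat_convergent_to X d x a)"

end

theory Submission
  imports Defs
begin

lemma parity_dense:
  assumes "\<forall>k. (even k \<longleftrightarrow> p) \<longrightarrow> P k"
  shows "\<not> ((\<lambda>n. real (card {k. k < n \<and> P k}) / real n) \<longlonglongrightarrow> 0)"
proof
  assume L: "(\<lambda>n. real (card {k. k < n \<and> P k}) / real n) \<longlonglongrightarrow> 0"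
  define f where "f i = 2 * i + (if p then 0 else 1)" for i :: nat
  have ge: "real (card {k. k < n \<and> P k}) / real n \<ge> 1/4" if n2: "n \<ge> 2" for n
  proof -
    have sub: "f ` {..<n div 2} \<subseteq> {k. k < n \<and> P k}"
    proof
      fix y assume "y \<in> f ` {..<n div 2}"
      then obtain i where i: "i < n div 2" "y = f i" by auto
      have "y < n" using i unfolding f_def by (auto split: if_splits)
      moreover have "P y" using assms i unfolding f_def by (auto split: if_splits)
      ultimately show "y \<in> {k. k < n \<and> P k}" by simp
    qed
    have inj: "inj_on f {..<n div 2}" unfolding f_def by (auto simp: inj_on_def)
    have "n div 2 \<le> card {k. k < n \<and> P k}"
      using card_mono[OF _ sub] card_image[OF inj] by simp
    hence "real (n div 2) \<le> real (card {k. k < n \<and> P k})" by simp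
    moreover have "real n / 4 \<le> real (n div 2)" using n2 by linarith
    ultimately have "real n / 4 \<le> real (card {k. k < n \<and> P k})" by linarith
    thus ?thesis using n2 by (simp add: field_simps)
  qed
  have "eventually (\<lambda>n. real (card {k. k < n \<and> P k}) / real n < 1/4) sequentially"
    by (rule order_tendstoD(2)[OF L]) simp
  moreover have "eventually (\<lambda>n. n \<ge> (2::nat)) sequentially" by (simp add: eventually_ge_at_top)
  ultimately have "eventually (\<lambda>n. False) sequentially"
    by eventually_elim (use ge in force)
  thus False by simp
qed

lemma conv_imp_stat:
  assumes "Metric_space X d" and "limitin (Metric_space.mtopology X d) x a sequentially"
  shows "stat_convergent_to X d x a"
proof -
  interpret M: Metric_space X d by fact
  have a: "a \<in> X" and lim: "\<forall>\<epsilon>>0. \<exists>N. \<forall>n\<ge>N. x n \<in> X \<and> d (x n) a < \<epsilon>"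
    using assms(2) M.limit_metric_sequentially by auto
  show ?thesis unfolding stat_convergent_to_def
  proof (intro conjI allI impI)
    show "a \<in> X" by fact
    fix \<epsilon> :: real assume "\<epsilon> > 0"
    then obtain N where N: "\<forall>n\<ge>N. d (x n) a < \<epsilon>" using lim by blast
    have "card {k. k < n \<and> d (x k) a \<ge> \<epsilon>} \<le> N" for n
    proof -
      have "{k. k < n \<and> d (x k) a \<ge> \<epsilon>} \<subseteq> {..<N}" using N by (metis (mono_tags, lifting) lessThan_iff mem_Collect_eq not_le subsetI)
      thus ?thesis using card_mono[of "{..<N}"] by fastforce
    qed
    hence le: "real (card {k. k < n \<and> d (x k) a \<ge> \<epsilon>}) / real n \<le> real N / real n" for n
      by (simp add: divide_right_mono)
    show "(\<lambda>n. real (card {k. k < n \<and> d (x k) a \<ge> \<epsilon>}) / real n) \<longlonglongrightarrow> 0"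
      by (rule tendsto_sandwich[OF _ _ tendsto_const lim_const_over_n[of "real N"]])
         (use le in auto)
  qed
qed

lemma stat_transfer:
  assumes m1: "Metric_space X d1" and m2: "Metric_space X d2"
    and T: "Metric_space.mtopology X d1 = Metric_space.mtopology X d2"
    and r: "range x \<subseteq> X" and s: "stat_convergent_to X d1 x a"
  shows "stat_convergent_to X d2 x a"
proof -
  interpret M1: Metric_space X d1 by fact
  interpret M2: Metric_space X d2 by fact
  have a: "a \<in> X" using s by (simp add: stat_convergent_to_def)
  show ?thesis unfolding stat_convergent_to_def
  proof (intro conjI allI impI)
    show "a \<in> X" by fact
    fix \<epsilon> :: real assume e: "\<epsilon> > 0"
    have "openin M1.mtopology (M2.mball a \<epsilon>)" using T by simp
    moreover have "a \<in> M2.mball a \<epsilon>" using a e by simp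
    ultimately obtain \<delta> where d: "\<delta> > 0" "M1.mball a \<delta> \<subseteq> M2.mball a \<epsilon>"
      using M1.openin_mtopology by blast
    have sub: "{k. k < n \<and> d2 (x k) a \<ge> \<epsilon>} \<subseteq> {k. k < n \<and> d1 (x k) a \<ge> \<delta>}" for n
    proof (clarsimp)
      fix k assume "k < n" "\<epsilon> \<le> d2 (x k) a"
      show "\<delta> \<le> d1 (x k) a"
      proof (rule ccontr)
        assume "\<not> \<delta> \<le> d1 (x k) a"
        hence "x k \<in> M1.mball a \<delta>" using a r by (auto simp: M1.commute)
        hence "x k \<in> M2.mball a \<epsilon>" using d by blast
        thus False using \<open>\<epsilon> \<le> d2 (x k) a\<close> by (auto simp: M2.commute)
      qed
    qed
    have le: "real (card {k. k < n \<and> d2 (x k) a \<ge> \<epsilon>}) / real n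
            \<le> real (card {k. k < n \<and> d1 (x k) a \<ge> \<delta>}) / real n" for n
      using card_mono[OF _ sub[of n]] by (simp add: divide_right_mono)
    have lim: "(\<lambda>n. real (card {k. k < n \<and> d1 (x k) a \<ge> \<delta>}) / real n) \<longlonglongrightarrow> 0"
      using s d(1) by (simp add: stat_convergent_to_def)
    show "(\<lambda>n. real (card {k. k < n \<and> d2 (x k) a \<ge> \<epsilon>}) / real n) \<longlonglongrightarrow> 0"
      by (rule tendsto_sandwich[OF _ _ tendsto_const lim]) (use le in auto)
  qed
qed

lemma bad_seq:
  assumes m1: "Metric_space X d1" and m2: "Metric_space X d2"
    and o1: "openin (Metric_space.mtopology X d1) S"
    and o2: "\<not> openin (Metric_space.mtopology X d2) S"
  shows "\<exists>z a. range z \<subseteq> X \<and> limitin (Metric_space.mtopology X d2) z a sequentially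
            \<and> (\<forall>c. \<not> stat_convergent_to X d1 z c)"
proof -
  interpret M1: Metric_space X d1 by fact
  interpret M2: Metric_space X d2 by fact
  have SX: "S \<subseteq> X" using o1 unfolding M1.openin_mtopology by blast
  obtain a where aS: "a \<in> S" and nb: "\<forall>r>0. \<not> M2.mball a r \<subseteq> S"
    using o2 SX unfolding M2.openin_mtopology by blast
  have aX: "a \<in> X" using aS SX by blast
  obtain \<epsilon> where e: "\<epsilon> > 0" "M1.mball a \<epsilon> \<subseteq> S" using o1 aS unfolding M1.openin_mtopology by blast
  have "\<forall>n. \<exists>y. y \<in> X \<and> d2 a y < 1 / real (Suc n) \<and> d1 a y \<ge> \<epsilon>"
  proof
    fix n
    have pos: "1 / real (Suc n) > 0" by simp
    have "\<not> M2.mball a (1 / real (Suc n)) \<subseteq> S" using nb pos by blast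
    then obtain y where "y \<in> M2.mball a (1 / real (Suc n))" "y \<notin> S"
      by blast
    moreover hence "y \<notin> M1.mball a \<epsilon>" using e by blast
    ultimately show "\<exists>y. y \<in> X \<and> d2 a y < 1 / real (Suc n) \<and> d1 a y \<ge> \<epsilon>"
      using aX by (auto simp: not_less)
  qed
  then obtain x where x: "\<And>n. x n \<in> X" "\<And>n. d2 a (x n) < 1 / real (Suc n)" "\<And>n. d1 a (x n) \<ge> \<epsilon>"
    by metis
  define z where "z k = (if even k then x (k div 2) else a)" for k
  have zX: "range z \<subseteq> X" using x aX by (auto simp: z_def)
  have lim: "limitin M2.mtopology z a sequentially"
    unfolding M2.limit_metric_sequentially
  proof (intro conjI allI impI)
    show "a \<in> X" by fact
    fix r :: real assume r: "r > 0"
    obtain N0 where N1: "N0 > 0" "inverse (real N0) < r" using ex_inverse_of_nat_less r by blast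
    have "inverse (real (Suc N0)) \<le> inverse (real N0)"
      by (rule le_imp_inverse_le) (use N1 in auto)
    hence N0: "inverse (real (Suc N0)) < r" using N1 by linarith
    show "\<exists>N. \<forall>n\<ge>N. z n \<in> X \<and> d2 (z n) a < r"
    proof (intro exI allI impI)
      fix n assume n: "n \<ge> 2 * N0"
      show "z n \<in> X \<and> d2 (z n) a < r"
      proof (cases "even n")
        case True
        have "d2 (z n) a = d2 a (x (n div 2))" using True by (simp add: z_def M2.commute)
        also have "\<dots> < 1 / real (Suc (n div 2))" by (rule x(2))
        also have "\<dots> \<le> 1 / real (Suc N0)" using n by (simp add: frac_le)
        also have "\<dots> < r" using N0 by (simp add: inverse_eq_divide)
        finally show ?thesis using zX r by auto
      next
        case False thus ?thesis using aX r by (simp add: z_def)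
      qed
    qed
  qed
  have nst: "\<not> stat_convergent_to X d1 z c" for c
  proof
    assume s: "stat_convergent_to X d1 z c"
    have cX: "c \<in> X" using s by (simp add: stat_convergent_to_def)
    show False
    proof (cases "c = a")
      case True
      have "\<forall>k. (even k \<longleftrightarrow> True) \<longrightarrow> \<epsilon> \<le> d1 (z k) c"
        using x(3) True by (simp add: z_def M1.commute)
      hence "\<not> ((\<lambda>n. real (card {k. k < n \<and> \<epsilon> \<le> d1 (z k) c}) / real n) \<longlonglongrightarrow> 0)"
        by (rule parity_dense)
      moreover have "(\<lambda>n. real (card {k. k < n \<and> \<epsilon> \<le> d1 (z k) c}) / real n) \<longlonglongrightarrow> 0"
        using s e(1) by (simp add: stat_convergent_to_def)
      ultimately show False by blast
    next
      case False
      hence pos: "d1 a c > 0" using aX cX by simp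
      have "\<forall>k. (even k \<longleftrightarrow> False) \<longrightarrow> d1 a c \<le> d1 (z k) c"
        by (simp add: z_def)
      hence "\<not> ((\<lambda>n. real (card {k. k < n \<and> d1 a c \<le> d1 (z k) c}) / real n) \<longlonglongrightarrow> 0)"
        by (rule parity_dense)
      moreover have "(\<lambda>n. real (card {k. k < n \<and> d1 a c \<le> d1 (z k) c}) / real n) \<longlonglongrightarrow> 0"
        using s pos by (simp add: stat_convergent_to_def)
      ultimately show False by blast
    qed
  qed
  show ?thesis using zX lim nst by blast
qed

theorem theorem2:
  fixes X :: "'a set" and d1 d2 :: "'a \<Rightarrow> 'a \<Rightarrow> real"
  assumes "Metric_space X d1" and "Metric_space X d2"
  defines "SC1 \<equiv> {x. range x \<subseteq> X \<and> stat_convergent X d1 x}"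
      and "SC2 \<equiv> {x. range x \<subseteq> X \<and> stat_convergent X d2 x}"
      and "C1 \<equiv> {x. range x \<subseteq> X \<and> (\<exists>a. limitin (Metric_space.mtopology X d1) x a sequentially)}"
      and "C2 \<equiv> {x. range x \<subseteq> X \<and> (\<exists>a. limitin (Metric_space.mtopology X d2) x a sequentially)}"
  shows "(SC1 = SC2 \<longleftrightarrow> C1 = C2) \<and>
         (C1 = C2 \<longleftrightarrow> Metric_space.mtopology X d1 = Metric_space.mtopology X d2)"
proof -
  let ?T1 = "Metric_space.mtopology X d1" and ?T2 = "Metric_space.mtopology X d2"
  have TC: "?T1 = ?T2 \<Longrightarrow> C1 = C2" unfolding C1_def C2_def by simp
  have TS: "SC1 = SC2" if T: "?T1 = ?T2"
    unfolding SC1_def SC2_def stat_convergent_def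
    using stat_transfer[OF assms(1,2) T] stat_transfer[OF assms(2,1) T[symmetric]] by blast
  have CT: "?T1 = ?T2" if C: "C1 = C2"
  proof (rule ccontr)
    assume "?T1 \<noteq> ?T2"
    then obtain S where "openin ?T1 S \<noteq> openin ?T2 S" using topology_eq by blast
    then consider "openin ?T1 S" "\<not> openin ?T2 S" | "openin ?T2 S" "\<not> openin ?T1 S" by blast
    thus False
    proof cases
      case 1
      then obtain z a where z: "range z \<subseteq> X" "limitin ?T2 z a sequentially"
        "\<forall>c. \<not> stat_convergent_to X d1 z c" using bad_seq[OF assms(1,2)] by blast
      hence "z \<in> C1" using C unfolding C2_def by blast
      then obtain c where "limitin ?T1 z c sequentially" unfolding C1_def by blast
      thus False using conv_imp_stat[OF assms(1)] z(3) by blast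
    next
      case 2
      then obtain z a where z: "range z \<subseteq> X" "limitin ?T1 z a sequentially"
        "\<forall>c. \<not> stat_convergent_to X d2 z c" using bad_seq[OF assms(2,1)] by blast
      hence "z \<in> C2" using C unfolding C1_def by blast
      then obtain c where "limitin ?T2 z c sequentially" unfolding C2_def by blast
      thus False using conv_imp_stat[OF assms(2)] z(3) by blast
    qed
  qed
  have ST: "?T1 = ?T2" if C: "SC1 = SC2"
  proof (rule ccontr)
    assume "?T1 \<noteq> ?T2"
    then obtain S where "openin ?T1 S \<noteq> openin ?T2 S" using topology_eq by blast
    then consider "openin ?T1 S" "\<not> openin ?T2 S" | "openin ?T2 S" "\<not> openin ?T1 S" by blast
    thus False
    proof cases
      case 1
      then obtain z a where z: "range z \<subseteq> X" "limitin ?T2 z a sequentially"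
        "\<forall>c. \<not> stat_convergent_to X d1 z c" using bad_seq[OF assms(1,2)] by blast
      hence "z \<in> SC2" using conv_imp_stat[OF assms(2)] unfolding SC2_def stat_convergent_def by blast
      hence "z \<in> SC1" using C by simp
      thus False using z(3) unfolding SC1_def stat_convergent_def by blast
    next
      case 2
      then obtain z a where z: "range z \<subseteq> X" "limitin ?T1 z a sequentially"
        "\<forall>c. \<not> stat_convergent_to X d2 z c" using bad_seq[OF assms(2,1)] by blast
      hence "z \<in> SC1" using conv_imp_stat[OF assms(1)] unfolding SC1_def stat_convergent_def by blast
      hence "z \<in> SC2" using C by simp
      thus False using z(3) unfolding SC2_def stat_convergent_def by blast
    qed
  qed
  show ?thesis using TC TS CT ST by blast
qed

end
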